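(* Let $X$ be a $k$-variety. Then $X$ admits a nontrivial rational $\mathbb{G}_a$-action if and only if $X$ is birationally ruled, i.e. birationally isomorphic over $k$ to $Y\times\mathbb{P}^1$ for some $k$-variety $Y$.
   Context: Throughout, $k$ is a field of characteristic zero and a $k$-variety is a separated geometrically integral scheme of finite type over $k$; $K_X$ denotes the field of rational functions of $X$, and $\mathbb{G}_a=\mathrm{Spec}(k[t])$. A rational $\mathbb{G}_a$-action on $X$ is a rational map $\alpha:\mathbb{G}_a\times X\dashrightarrow X$ such that $\alpha\circ(\mathrm{id}\times\alpha)=\alpha\circ(\mathrm{m}\times\mathrm{id}_X)$ as rational maps $\mathbb{G}_a\times\mathbb{G}_a\times X\dashrightarrow X$ ($\mathrm{m}$ the group law) and $\alpha(0,x)=x$ wherever defined. Equivalently, it is given by a homomorphism of $k$-fields $\alpha^*:K_X\to K_X(t)$ with image in the valuation ring $\mathcal{O}_{\nu_0}=\{r(t)\in K_X(t):\mathrm{ord}_{t=0}r\ge 0\}$, such that $(\alpha^*\otimes\mathrm{id})\circ\alpha^* $ equals $\alpha^*$ followed by $t\mapsto t+t'$ (as maps $K_X\to K_X(t,t')$) and such that $\alpha^*$ composed with reduction $\mathcal{O}_{\nu_0}\to\mathcal{O}_{\nu_0}/t\mathcal{O}_{\nu_0}\cong K_X$ is the identity. The action is trivial if $\alpha^*(f)=f$ for all $f\in K_X$. *)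

theory Defs
  imports "HOL-Computational_Algebra.Polynomial" "HOL-Computational_Algebra.Fraction_Field"
begin

text \<open>The function field K_X is modelled as the type 'a (a field of characteristic zero),
  and the base field k as a subfield of it.\<close>

definition subfield :: "'a::field set \<Rightarrow> bool" where
  "subfield F \<longleftrightarrow> 0 \<in> F \<and> 1 \<in> F \<and> (\<forall>x\<in>F. \<forall>y\<in>F. x + y \<in> F \<and> x * y \<in> F)
     \<and> (\<forall>x\<in>F. - x \<in> F \<and> inverse x \<in> F)"

definition gen_field :: "'a::field set \<Rightarrow> 'a set" where
  "gen_field S = \<Inter>{F. subfield F \<and> S \<subseteq> F}"

definition algebraic_over :: "'a::field set \<Rightarrow> 'a \<Rightarrow> bool" where
  "algebraic_over F x \<longleftrightarrow> (\<exists>p. p \<noteq> 0 \<and> (\<forall>i. coeff p i \<in> F) \<and> poly p x = 0)"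

definition fin_gen_over :: "'a::field set \<Rightarrow> 'a set \<Rightarrow> bool" where
  "fin_gen_over k L \<longleftrightarrow> (\<exists>S. finite S \<and> S \<subseteq> L \<and> gen_field (k \<union> S) = L)"

definition alg_closed_in :: "'a::field set \<Rightarrow> 'a set \<Rightarrow> bool" where
  "alg_closed_in k L \<longleftrightarrow> (\<forall>y\<in>L. algebraic_over k y \<longrightarrow> y \<in> k)"

text \<open>L is (k-isomorphic to) the function field of a k-variety: finitely generated over k,
  with k algebraically closed in L (equivalent to geometric integrality in char 0).\<close>
definition function_field_of_variety :: "'a::field set \<Rightarrow> 'a set \<Rightarrow> bool" where
  "function_field_of_variety k L \<longleftrightarrow>
     subfield k \<and> subfield L \<and> k \<subseteq> L \<and> fin_gen_over k L \<and> alg_closed_in k L"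

text \<open>Birationally ruled: K_X is k-isomorphic to K_Y(t) for a k-variety Y, i.e.
  K_X = L(x) with L the function field of a k-variety and x transcendental over L.\<close>
definition birationally_ruled :: "'a::field set \<Rightarrow> bool" where
  "birationally_ruled k \<longleftrightarrow>
     (\<exists>L x. function_field_of_variety k L \<and> \<not> algebraic_over L x \<and> gen_field (L \<union> {x}) = UNIV)"

text \<open>K(t) is 'a poly fract; K(t,t') is modelled as K(t')(t) = 'a poly fract poly fract.\<close>
definition const_rf :: "'a::field \<Rightarrow> 'a poly fract" where
  "const_rf c = Fract [:c:] 1"

definition var_rf :: "'a::field poly fract" where
  "var_rf = Fract [:0, 1:] 1"

text \<open>p(t) \<mapsto> p(t + t'), as a polynomial in t over K(t').\<close>
definition shift_poly :: "'a::field poly \<Rightarrow> 'a poly fract poly" where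
  "shift_poly p = pcompose (map_poly const_rf p) [:var_rf, 1:]"

definition rational_Ga_action :: "'a::field set \<Rightarrow> ('a \<Rightarrow> 'a poly fract) \<Rightarrow> bool" where
  "rational_Ga_action k \<alpha> \<longleftrightarrow>
     (\<forall>x y. \<alpha> (x + y) = \<alpha> x + \<alpha> y) \<and> (\<forall>x y. \<alpha> (x * y) = \<alpha> x * \<alpha> y) \<and> \<alpha> 1 = 1 \<and>
     (\<forall>c\<in>k. \<alpha> c = const_rf c) \<and>
     (\<forall>f. \<exists>p q. poly q 0 \<noteq> 0 \<and> \<alpha> f = Fract p q \<and> poly p 0 / poly q 0 = f) \<and>
     (\<forall>f p q. q \<noteq> 0 \<longrightarrow> \<alpha> f = Fract p q \<longrightarrow>
        Fract (map_poly \<alpha> p) (map_poly \<alpha> q) = Fract (shift_poly p) (shift_poly q))"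

definition trivial_action :: "('a::field \<Rightarrow> 'a poly fract) \<Rightarrow> bool" where
  "trivial_action \<alpha> \<longleftrightarrow> (\<forall>f. \<alpha> f = const_rf f)"

end

theory Submission
  imports Defs
begin


definition hom :: "('a::comm_ring_1 \<Rightarrow> 'b::comm_ring_1) \<Rightarrow> bool" where
  "hom f \<longleftrightarrow> f 1 = 1 \<and> (\<forall>x y. f (x + y) = f x + f y) \<and> (\<forall>x y. f (x * y) = f x * f y)"

lemma homI: "f 1 = 1 \<Longrightarrow> (\<And>x y. f (x + y) = f x + f y) \<Longrightarrow> (\<And>x y. f (x * y) = f x * f y) \<Longrightarrow> hom f"
  unfolding hom_def by auto

lemma hom_1: "hom f \<Longrightarrow> f 1 = 1" by (simp add: hom_def)
lemma hom_add: "hom f \<Longrightarrow> f (x + y) = f x + f y" by (simp add: hom_def)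
lemma hom_mult: "hom f \<Longrightarrow> f (x * y) = f x * f y" by (simp add: hom_def)
lemma hom_0: "hom f \<Longrightarrow> f 0 = 0"
  using hom_add[of f 0 0] by simp
lemma hom_uminus: "hom f \<Longrightarrow> f (- x) = - f x"
proof -
  assume h: "hom f"
  have "f x + f (- x) = 0" using hom_add[OF h, of x "-x"] hom_0[OF h] by simp
  then show ?thesis by (metis minus_unique)
qed
lemma hom_diff: "hom f \<Longrightarrow> f (x - y) = f x - f y"
  using hom_add[of f x "-y"] hom_uminus[of f y] by simp
lemma hom_sum: "hom f \<Longrightarrow> f (sum g A) = (\<Sum>a\<in>A. f (g a))"
  by (induction A rule: infinite_finite_induct) (auto simp: hom_0 hom_add)
lemma hom_of_nat: "hom f \<Longrightarrow> f (of_nat n) = of_nat n"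
  by (induction n) (auto simp: hom_0 hom_add hom_1)
lemma hom_power: "hom f \<Longrightarrow> f (x ^ n) = f x ^ n"
  by (induction n) (auto simp: hom_mult hom_1)
lemma hom_comp: "hom f \<Longrightarrow> hom g \<Longrightarrow> hom (f \<circ> g)"
  unfolding hom_def by auto

lemma hom_field_nz: "hom (f :: 'a::field \<Rightarrow> 'b::field) \<Longrightarrow> x \<noteq> 0 \<Longrightarrow> f x \<noteq> 0"
  using hom_mult[of f x "inverse x"] hom_1[of f] by auto
lemma hom_field_inj: "hom (f :: 'a::field \<Rightarrow> 'b::field) \<Longrightarrow> f x = f y \<longleftrightarrow> x = y"
  using hom_field_nz[of f "x - y"] hom_diff[of f x y] by auto
lemma hom_inverse: assumes h: "hom (f :: 'a::field \<Rightarrow> 'b::field)" shows "f (inverse x) = inverse (f x)"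
proof (cases "x = 0")
  case True then show ?thesis using hom_0[OF h] by simp
next
  case False
  have "f x * f (inverse x) = 1" using hom_mult[OF h, of x "inverse x"] hom_1[OF h] False by simp
  then show ?thesis by (metis inverse_unique)
qed
lemma hom_divide: "hom (f :: 'a::field \<Rightarrow> 'b::field) \<Longrightarrow> f (x / y) = f x / f y"
  by (simp add: divide_inverse hom_mult hom_inverse)

lemma hom_map_poly: "hom f \<Longrightarrow> hom (map_poly f)"
proof (rule homI)
  assume h: "hom f"
  note z = hom_0[OF h]
  show "map_poly f 1 = 1" using hom_1[OF h] by simp
  show "map_poly f (x + y) = map_poly f x + map_poly f y" for x y
    by (rule poly_eqI) (simp add: coeff_map_poly z hom_add[OF h])
  show "map_poly f (x * y) = map_poly f x * map_poly f y" for x y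
    by (rule poly_eqI) (simp add: coeff_map_poly z coeff_mult hom_sum[OF h] hom_mult[OF h])
qed

lemma map_poly_pcompose:
  assumes h: "hom f"
  shows "map_poly f (pcompose p q) = pcompose (map_poly f p) (map_poly f q)"
proof (induction p)
  case 0 then show ?case by simp
next
  case (pCons a p)
  have m: "hom (map_poly f)" by (rule hom_map_poly[OF h])
  have "map_poly f (pcompose (pCons a p) q) = map_poly f [:a:] + map_poly f q * map_poly f (pcompose p q)"
    by (simp add: pcompose_pCons hom_add[OF m] hom_mult[OF m])
  also have "\<dots> = pcompose (map_poly f (pCons a p)) (map_poly f q)"
    using pCons by (simp add: map_poly_pCons hom_0[OF h] pcompose_pCons)
  finally show ?case .
qed

lemma hom_pcompose: "hom (\<lambda>p::'a::comm_ring_1 poly. pcompose p q)"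
  by (rule homI) (simp_all add: pcompose_1 pcompose_add pcompose_mult)

lemma poly_map_poly_hom: "hom f \<Longrightarrow> f (poly p x) = poly (map_poly f p) (f x)"
  by (induction p) (simp_all add: hom_0 map_poly_pCons hom_add hom_mult)

lemma degree_map_poly_field: "hom (f :: 'a::field \<Rightarrow> 'b::field) \<Longrightarrow> degree (map_poly f p) = degree p"
  by (rule degree_map_poly) (simp add: hom_field_nz)

lemma lead_coeff_map_poly_field: "hom (f :: 'a::field \<Rightarrow> 'b::field) \<Longrightarrow> lead_coeff (map_poly f p) = f (lead_coeff p)"
  by (simp add: degree_map_poly_field coeff_map_poly hom_0)

lemma map_poly_field_eq_0: "hom (f :: 'a::field \<Rightarrow> 'b::field) \<Longrightarrow> map_poly f p = 0 \<longleftrightarrow> p = 0"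
  by (rule map_poly_eq_0_iff) (simp_all add: hom_0 hom_field_nz)

definition bez :: "'a::comm_ring_1 \<Rightarrow> 'a \<Rightarrow> bool" where
  "bez a b \<longleftrightarrow> (\<exists>u v. u * a + v * b = 1)"

lemma bez_hom: "hom h \<Longrightarrow> bez a b \<Longrightarrow> bez (h a) (h b)"
  unfolding bez_def by (metis hom_1 hom_add hom_mult)

lemma bez_dvd:
  assumes "bez a b" "a * d = c * b" shows "b dvd d"
proof -
  obtain u v where uv: "u * a + v * b = 1" using assms(1) bez_def by blast
  have "d = (u * a + v * b) * d" using uv by simp
  also have "\<dots> = b * (u * c + v * d)" using assms(2) by (simp add: algebra_simps) (metis mult.assoc mult.commute)
  finally show ?thesis by (metis dvdI)
qed

lemma monic_dvd_antisym:
  fixes b d :: "'a::field poly"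
  assumes "b dvd d" "d dvd b" "lead_coeff b = 1" "lead_coeff d = 1"
  shows "b = d"
proof -
  obtain w where w: "d = b * w" using assms(1) by blast
  obtain w' where w': "b = d * w'" using assms(2) by blast
  have b0: "b \<noteq> 0" using assms(3) by auto
  have "b * 1 = b * (w * w')" by (metis w w' mult.assoc mult_1_right)
  then have ww: "w * w' = 1" using b0 mult_left_cancel[of b 1 "w * w'"] by simp
  then have "degree w = 0" by (metis add_is_0 degree_1 degree_mult_eq mult_eq_0_iff one_neq_zero)
  then obtain c where c: "w = [:c:]" by (metis degree_eq_zeroE)
  have "lead_coeff d = lead_coeff b * c" using w c by (simp add: lead_coeff_mult)
  then have "c = 1" using assms by simp
  then show ?thesis using w c by simp
qed

lemma bez_unique:
  fixes a b c d :: "'a::field poly"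
  assumes "bez a b" "bez c d" "lead_coeff b = 1" "lead_coeff d = 1" "a * d = c * b"
  shows "a = c \<and> b = d"
proof -
  have "b dvd d" using bez_dvd[OF assms(1) assms(5)] .
  moreover have "d dvd b" using bez_dvd[OF assms(2), of b a] assms(5) by simp
  ultimately have bd: "b = d" using monic_dvd_antisym assms by blast
  have "d \<noteq> 0" using assms(4) by auto
  then show ?thesis using assms(5) bd by simp
qed

lemma bez_rep_exists:
  fixes p q :: "'a::field poly"
  assumes q0: "q \<noteq> 0"
  shows "\<exists>a b. bez a b \<and> lead_coeff b = 1 \<and> a * q = p * b"
proof -
  define S where "S = {u * p + v * q | u v. True}"
  have qS: "q \<in> S" unfolding S_def by (rule CollectI, rule exI[of _ 0], rule exI[of _ 1]) simp
  have "\<exists>n. \<exists>g\<in>S. g \<noteq> 0 \<and> degree g = n" using qS q0 by blast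
  define n where "n = (LEAST n. \<exists>g\<in>S. g \<noteq> 0 \<and> degree g = n)"
  obtain g where gS: "g \<in> S" and g0: "g \<noteq> 0" and gn: "degree g = n"
    using LeastI_ex[OF \<open>\<exists>n. \<exists>g\<in>S. g \<noteq> 0 \<and> degree g = n\<close>] unfolding n_def by blast
  have minimal: "h \<in> S \<Longrightarrow> h \<noteq> 0 \<Longrightarrow> degree g \<le> degree h" for h
    unfolding gn n_def by (rule Least_le) blast
  obtain u v where uv: "g = u * p + v * q" using gS unfolding S_def by blast
  have dvdS: "g dvd x" if xS: "x \<in> S" for x
  proof -
    obtain u' v' where x: "x = u' * p + v' * q" using xS unfolding S_def by blast
    have "x mod g = x - (x div g) * g" by (simp add: minus_div_mult_eq_mod)
    also have "\<dots> = (u' - (x div g) * u) * p + (v' - (x div g) * v) * q" using x uv by (simp add: algebra_simps)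
    finally have "x mod g \<in> S" unfolding S_def by blast
    then have "x mod g = 0" using minimal degree_mod_less[OF g0, of x] by force
    then show ?thesis by (simp add: mod_0_imp_dvd)
  qed
  have pS: "p \<in> S" unfolding S_def by (rule CollectI, rule exI[of _ 1], rule exI[of _ 0]) simp
  obtain a' where a': "p = g * a'" using dvdS[OF pS] by blast
  obtain b' where b': "q = g * b'" using dvdS[OF qS] by blast
  have "g * (u * a' + v * b') = g * 1" using uv a' b' by (simp add: algebra_simps)
  then have uv': "u * a' + v * b' = 1" using g0 by (metis mult_cancel_left)
  have b'0: "b' \<noteq> 0" using b' q0 by auto
  define c where "c = lead_coeff b'"
  have c0: "c \<noteq> 0" using b'0 c_def by auto
  define a where "a = smult (inverse c) a'"
  define b where "b = smult (inverse c) b'"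
  have "smult c u * a + smult c v * b = 1" using uv' c0 unfolding a_def b_def by (simp add: algebra_simps)
  then have "bez a b" unfolding bez_def by blast
  moreover have "lead_coeff b = 1" using c0 unfolding b_def c_def by simp
  moreover have "a * q = p * b" unfolding a_def b_def using a' b' by (simp add: algebra_simps)
  ultimately show ?thesis by blast
qed



definition polyin :: "'a::field set \<Rightarrow> 'a poly \<Rightarrow> bool" where
  "polyin F p \<longleftrightarrow> (\<forall>i. coeff p i \<in> F)"

lemma subfield_0: "subfield F \<Longrightarrow> 0 \<in> F" by (simp add: subfield_def)
lemma subfield_1: "subfield F \<Longrightarrow> 1 \<in> F" by (simp add: subfield_def)
lemma subfield_add: "subfield F \<Longrightarrow> x \<in> F \<Longrightarrow> y \<in> F \<Longrightarrow> x + y \<in> F" by (simp add: subfield_def)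
lemma subfield_mult: "subfield F \<Longrightarrow> x \<in> F \<Longrightarrow> y \<in> F \<Longrightarrow> x * y \<in> F" by (simp add: subfield_def)
lemma subfield_uminus: "subfield F \<Longrightarrow> x \<in> F \<Longrightarrow> - x \<in> F" by (simp add: subfield_def)
lemma subfield_inverse: "subfield F \<Longrightarrow> x \<in> F \<Longrightarrow> inverse x \<in> F" by (simp add: subfield_def)
lemma subfield_diff: "subfield F \<Longrightarrow> x \<in> F \<Longrightarrow> y \<in> F \<Longrightarrow> x - y \<in> F"
  using subfield_add[of F x "-y"] subfield_uminus by fastforce
lemma subfield_divide: "subfield F \<Longrightarrow> x \<in> F \<Longrightarrow> y \<in> F \<Longrightarrow> x / y \<in> F"
  by (simp add: divide_inverse subfield_mult subfield_inverse)
lemma subfield_sum: "subfield F \<Longrightarrow> (\<And>a. a \<in> A \<Longrightarrow> g a \<in> F) \<Longrightarrow> sum g A \<in> F"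
  by (induction A rule: infinite_finite_induct) (auto simp: subfield_0 subfield_add)

lemma subfield_Inter: "(\<And>F. F \<in> M \<Longrightarrow> subfield F) \<Longrightarrow> subfield (\<Inter>M)"
  unfolding subfield_def by blast

lemma gen_field_subfield: "subfield (gen_field A)"
  unfolding gen_field_def by (rule subfield_Inter) blast
lemma gen_field_sub: "A \<subseteq> gen_field A"
  unfolding gen_field_def by blast
lemma gen_field_least: "subfield F \<Longrightarrow> A \<subseteq> F \<Longrightarrow> gen_field A \<subseteq> F"
  unfolding gen_field_def by blast

lemma polyin_0: "subfield F \<Longrightarrow> polyin F 0" by (simp add: polyin_def subfield_0)
lemma polyin_const: "subfield F \<Longrightarrow> c \<in> F \<Longrightarrow> polyin F [:c:]"
  by (simp add: polyin_def coeff_pCons subfield_0 split: nat.splits)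
lemma polyin_1: "subfield F \<Longrightarrow> polyin F 1"
  by (metis one_pCons polyin_const subfield_1)
lemma polyin_pCons: "subfield F \<Longrightarrow> c \<in> F \<Longrightarrow> polyin F p \<Longrightarrow> polyin F (pCons c p)"
  by (simp add: polyin_def coeff_pCons split: nat.splits)
lemma polyin_X: "subfield F \<Longrightarrow> polyin F [:0, 1:]"
  by (simp add: polyin_pCons polyin_1 subfield_0 flip: one_pCons)
lemma polyin_add: "subfield F \<Longrightarrow> polyin F p \<Longrightarrow> polyin F q \<Longrightarrow> polyin F (p + q)"
  by (simp add: polyin_def subfield_add)
lemma polyin_uminus: "subfield F \<Longrightarrow> polyin F p \<Longrightarrow> polyin F (- p)"
  by (simp add: polyin_def subfield_uminus)
lemma polyin_diff: "subfield F \<Longrightarrow> polyin F p \<Longrightarrow> polyin F q \<Longrightarrow> polyin F (p - q)"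
  by (simp add: polyin_def subfield_diff)
lemma polyin_mult: "subfield F \<Longrightarrow> polyin F p \<Longrightarrow> polyin F q \<Longrightarrow> polyin F (p * q)"
  unfolding polyin_def coeff_mult by (auto intro!: subfield_sum subfield_mult)
lemma polyin_smult: "subfield F \<Longrightarrow> c \<in> F \<Longrightarrow> polyin F p \<Longrightarrow> polyin F (smult c p)"
  by (simp add: polyin_def subfield_mult)
lemma polyin_mono: "F \<subseteq> G \<Longrightarrow> polyin F p \<Longrightarrow> polyin G p"
  unfolding polyin_def by blast

lemma poly_in_subfield: "subfield F \<Longrightarrow> polyin F p \<Longrightarrow> x \<in> F \<Longrightarrow> poly p x \<in> F"
proof (induction p)
  case 0 then show ?case by (simp add: subfield_0)
next
  case (pCons a p)
  have a: "a \<in> F" using pCons.prems(2) unfolding polyin_def by (metis coeff_pCons_0)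
  have "polyin F p" using pCons.prems(2) unfolding polyin_def by (metis coeff_pCons_Suc)
  then have "poly p x \<in> F" using pCons by blast
  then show ?case using a pCons.prems by (simp add: subfield_add subfield_mult)
qed

definition Qset :: "'a::field set \<Rightarrow> 'a \<Rightarrow> 'a set" where
  "Qset F x = {poly A x / poly B x | A B. polyin F A \<and> polyin F B \<and> poly B x \<noteq> 0}"

lemma QsetI: "polyin F A \<Longrightarrow> polyin F B \<Longrightarrow> poly B x \<noteq> 0 \<Longrightarrow> u = poly A x / poly B x \<Longrightarrow> u \<in> Qset F x"
  unfolding Qset_def by blast

lemma QsetE: assumes "u \<in> Qset F x"
  obtains A B where "polyin F A" "polyin F B" "poly B x \<noteq> 0" "u = poly A x / poly B x"
  using assms unfolding Qset_def by blast

lemma Qset_subfield: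
  assumes F: "subfield F"
  shows "subfield (Qset F x)"
proof -
  have c: "c \<in> Qset F x" if "c \<in> F" for c
  proof -
    have "c = poly [:c:] x / poly 1 x" by simp
    show ?thesis by (rule QsetI[OF polyin_const[OF F that] polyin_1[OF F]]) simp_all
  qed
  have add: "u + v \<in> Qset F x" if uq: "u \<in> Qset F x" and vq: "v \<in> Qset F x" for u v
  proof -
    obtain A B where AB: "polyin F A" "polyin F B" "poly B x \<noteq> 0" "u = poly A x / poly B x" using uq by (rule QsetE)
    obtain C D where CD: "polyin F C" "polyin F D" "poly D x \<noteq> 0" "v = poly C x / poly D x" using vq by (rule QsetE)
    have "u + v = poly (A * D + C * B) x / poly (B * D) x" using AB(3,4) CD(3,4) by (simp add: add_frac_eq)
    moreover have "polyin F (A * D + C * B)" "polyin F (B * D)" "poly (B * D) x \<noteq> 0"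
      using AB(1,2,3) CD(1,2,3) F by (simp_all add: polyin_add polyin_mult)
    ultimately show ?thesis by (intro QsetI)
  qed
  have mult: "u * v \<in> Qset F x" if uq: "u \<in> Qset F x" and vq: "v \<in> Qset F x" for u v
  proof -
    obtain A B where AB: "polyin F A" "polyin F B" "poly B x \<noteq> 0" "u = poly A x / poly B x" using uq by (rule QsetE)
    obtain C D where CD: "polyin F C" "polyin F D" "poly D x \<noteq> 0" "v = poly C x / poly D x" using vq by (rule QsetE)
    have "u * v = poly (A * C) x / poly (B * D) x" by (simp only: AB(4) CD(4) poly_mult times_divide_times_eq)
    moreover have "polyin F (A * C)" "polyin F (B * D)" "poly (B * D) x \<noteq> 0"
      using AB(1,2,3) CD(1,2,3) F by (simp_all add: polyin_mult)
    ultimately show ?thesis by (intro QsetI)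
  qed
  have neg: "- u \<in> Qset F x" if uq: "u \<in> Qset F x" for u
  proof -
    obtain A B where AB: "polyin F A" "polyin F B" "poly B x \<noteq> 0" "u = poly A x / poly B x" using uq by (rule QsetE)
    have "- u = poly (- A) x / poly B x" by (simp add: AB(4))
    then show ?thesis using AB polyin_uminus[OF F] by (intro QsetI)
  qed
  have inv: "inverse u \<in> Qset F x" if uq: "u \<in> Qset F x" for u
  proof -
    obtain A B where AB: "polyin F A" "polyin F B" "poly B x \<noteq> 0" "u = poly A x / poly B x" using uq by (rule QsetE)
    show ?thesis
    proof (cases "poly A x = 0")
      case True
      then have "inverse u = 0" by (simp add: AB(4))
      then show ?thesis using c[OF subfield_0[OF F]] by simp
    next
      case False
      have "inverse u = poly B x / poly A x" by (simp add: AB(4))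
      then show ?thesis using AB False by (intro QsetI)
    qed
  qed
  show ?thesis unfolding subfield_def
    using c[OF subfield_0[OF F]] c[OF subfield_1[OF F]] add mult neg inv by simp
qed

lemma F_sub_Qset: assumes "subfield F" "c \<in> F" shows "c \<in> Qset F x"
proof -
  have "c = poly [:c:] x / poly 1 x" by simp
  show ?thesis by (rule QsetI[OF polyin_const[OF assms] polyin_1[OF assms(1)]]) simp_all
qed
lemma x_in_Qset: assumes "subfield F" shows "x \<in> Qset F x"
proof -
  have "x = poly [:0,1:] x / poly 1 x" by simp
  show ?thesis by (rule QsetI[OF polyin_X[OF assms] polyin_1[OF assms]]) simp_all
qed

lemma gen_field_Qset: "subfield F \<Longrightarrow> gen_field (F \<union> {x}) \<subseteq> Qset F x"
  by (rule gen_field_least) (auto simp: Qset_subfield F_sub_Qset x_in_Qset)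

lemma Qset_gen_field:
  assumes F: "subfield F" shows "Qset F x \<subseteq> gen_field (F \<union> {x})"
proof
  fix u assume "u \<in> Qset F x"
  then obtain A B where AB: "polyin F A" "polyin F B" "u = poly A x / poly B x" by (rule QsetE)
  let ?G = "gen_field (F \<union> {x})"
  have G: "subfield ?G" by (rule gen_field_subfield)
  have FG: "F \<subseteq> ?G" and xG: "x \<in> ?G" using gen_field_sub[of "F \<union> {x}"] by auto
  have "poly A x \<in> ?G" "poly B x \<in> ?G"
    using poly_in_subfield[OF G] polyin_mono[OF FG] AB xG by blast+
  then show "u \<in> ?G" using AB subfield_divide[OF G] by simp
qed



lemma hom_const: "hom (const_rf :: 'a::field \<Rightarrow> 'a poly fract)"
  by (rule homI) (simp_all add: const_rf_def One_fract_def mult.commute flip: one_pCons)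

lemma const_inj: "const_rf (a::'a::field) = const_rf b \<longleftrightarrow> a = b"
  using hom_field_inj[OF hom_const] .

lemma hom_shift: "hom (shift_poly :: 'a::field poly \<Rightarrow> _)"
proof -
  have "shift_poly = (\<lambda>p. pcompose p [:var_rf, 1:]) \<circ> map_poly const_rf"
    by (auto simp: shift_poly_def)
  then show ?thesis using hom_comp[OF hom_pcompose[of "[:var_rf, 1:]"] hom_map_poly[OF hom_const]] by metis
qed

lemma const_plus_var: "const_rf c + var_rf = Fract [:c, 1:] 1"
  by (simp add: const_rf_def var_rf_def)

lemma poly_map_const_Fract:
  "poly (map_poly const_rf p) (Fract r 1) = Fract (pcompose p r) 1"
proof (induction p)
  case 0 then show ?case by (simp add: Zero_fract_def)
next
  case (pCons a p)
  have c0: "const_rf (0::'a) = 0" by (rule hom_0[OF hom_const])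
  have "map_poly const_rf (pCons a p) = pCons (const_rf a) (map_poly const_rf p)" by (rule map_poly_pCons[of const_rf, OF c0])
  then have "poly (map_poly const_rf (pCons a p)) (Fract r 1) = const_rf a + Fract r 1 * poly (map_poly const_rf p) (Fract r 1)"
    by simp
  also have "\<dots> = const_rf a + Fract r 1 * Fract (pcompose p r) 1" by (simp only: pCons.IH)
  also have "\<dots> = Fract (pcompose (pCons a p) r) 1" by (simp add: pcompose_pCons const_rf_def)
  finally show ?case .
qed

lemma coeff_lin_power: "coeff ([:c, 1:] ^ Suc m) m = of_nat (Suc m) * (c::'b::comm_ring_1)"
proof (induction m)
  case 0 then show ?case by simp
next
  case (Suc m)
  have "[:c, 1:] ^ Suc (Suc m) = smult c ([:c, 1:] ^ Suc m) + pCons 0 ([:c, 1:] ^ Suc m)"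
    by (simp add: algebra_simps)
  then have "coeff ([:c, 1:] ^ Suc (Suc m)) (Suc m) = c * coeff ([:c, 1:] ^ Suc m) (Suc m) + coeff ([:c, 1:] ^ Suc m) m"
    by simp
  also have "\<dots> = c + of_nat (Suc m) * c" using Suc coeff_linear_power[of c "Suc m"] by simp
  finally show ?case by (simp add: algebra_simps)
qed

lemma pcompose_monom: "pcompose (monom a n) (q::'b::comm_ring_1 poly) = smult a (q ^ n)"
proof -
  have "pcompose ([:0, 1:] ^ n) q = (pcompose [:0, 1:] q) ^ n" using hom_power[OF hom_pcompose[of q], of "[:0, 1:]" n] by simp
  then show ?thesis by (simp add: monom_altdef pcompose_smult pcompose_pCons)
qed

lemma coeff_pcompose_low:
  fixes r :: "'b::idom poly"
  assumes "degree r \<le> m"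
  shows "coeff (pcompose r [:c, 1:]) m = coeff r m"
proof (cases "degree r = m")
  case True
  have "degree (pcompose r [:c, 1:]) = m" using True by (simp add: degree_pcompose)
  then show ?thesis using lead_coeff_comp[of "[:c, 1:]" r] True by simp
next
  case False
  then have "degree (pcompose r [:c, 1:]) < m" using assms by (simp add: degree_pcompose)
  then show ?thesis using False assms by (simp add: coeff_eq_0)
qed

lemma coeff_pcompose_top:
  fixes p :: "'b::idom poly"
  assumes "degree p = Suc m"
  shows "coeff (pcompose p [:c, 1:]) (Suc m) = coeff p (Suc m)"
    and "coeff (pcompose p [:c, 1:]) m = coeff p m + of_nat (Suc m) * c * coeff p (Suc m)"
proof -
  show "coeff (pcompose p [:c, 1:]) (Suc m) = coeff p (Suc m)"
    using lead_coeff_comp[of "[:c, 1:]" p] assms by (simp add: degree_pcompose)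
  define a where "a = coeff p (Suc m)"
  define r where "r = p - monom a (Suc m)"
  have "degree r \<le> m"
  proof (rule degree_le, intro allI impI)
    fix i assume "m < i"
    then show "coeff r i = 0" using assms unfolding r_def a_def
      by (cases "i = Suc m") (auto simp: coeff_monom coeff_eq_0)
  qed
  have p: "p = monom a (Suc m) + r" unfolding r_def by simp
  have "coeff (pcompose p [:c, 1:]) m = a * coeff ([:c, 1:] ^ Suc m) m + coeff (pcompose r [:c, 1:]) m"
    by (subst p) (simp add: pcompose_add pcompose_monom)
  also have "\<dots> = a * (of_nat (Suc m) * c) + coeff r m"
    by (simp only: coeff_lin_power coeff_pcompose_low[OF \<open>degree r \<le> m\<close>])
  also have "coeff r m = coeff p m" unfolding r_def by (simp add: coeff_monom)
  finally show "coeff (pcompose p [:c, 1:]) m = coeff p m + of_nat (Suc m) * c * coeff p (Suc m)"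
    unfolding a_def by (simp add: algebra_simps)
qed



lemma shift_nz: "q \<noteq> 0 \<Longrightarrow> shift_poly (q :: 'a::field poly) \<noteq> 0"
  unfolding shift_poly_def
  by (subst pcompose_eq_0_iff) (simp_all add: map_poly_field_eq_0[OF hom_const])

lemma map_poly_lin: "hom f \<Longrightarrow> map_poly f [:a, 1:] = [:f a, 1:]"
  by (simp add: map_poly_pCons hom_0 hom_1)

lemma ruled_action:
  fixes k L :: "'a::field_char_0 set" and x :: 'a
  assumes kL: "k \<subseteq> L" and L: "subfield L" and tr: "\<not> algebraic_over L x"
    and gen: "gen_field (L \<union> {x}) = UNIV"
  shows "\<exists>\<alpha>. rational_Ga_action k \<alpha> \<and> \<not> trivial_action \<alpha>"
proof -
  have transc: "p = 0" if "polyin L p" "poly p x = 0" for p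
    using tr that unfolding algebraic_over_def polyin_def by blast
  have nzx: "poly B x \<noteq> 0" if "polyin L B" "B \<noteq> 0" for B
    using transc that by blast
  have allQ: "f \<in> Qset L x" for f using gen_field_Qset[OF L, of x] gen by blast
  define T where "T = [:x, 1:]"
  have degT: "degree T > 0" unfolding T_def by simp
  have Tnz: "pcompose B T \<noteq> 0" if "B \<noteq> 0" for B :: "'a poly"
    using pcompose_eq_0_iff[OF degT] that by blast
  define R where "R f r \<longleftrightarrow> (\<exists>A B. polyin L A \<and> polyin L B \<and> B \<noteq> 0 \<and> f = poly A x / poly B x
      \<and> r = Fract (pcompose A T) (pcompose B T))" for f r
  define \<alpha> where "\<alpha> f = (SOME r. R f r)" for f
  have rep: "\<exists>A B. polyin L A \<and> polyin L B \<and> B \<noteq> 0 \<and> f = poly A x / poly B x" for f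
  proof -
    obtain A B where "polyin L A" "polyin L B" "poly B x \<noteq> 0" "f = poly A x / poly B x"
      using allQ[of f] by (rule QsetE)
    then show ?thesis by (metis poly_0)
  qed
  have exR: "\<exists>r. R f r" for f using rep[of f] unfolding R_def by blast
  have achar: "\<alpha> f = Fract (pcompose A T) (pcompose B T)"
    if AB: "polyin L A" "polyin L B" "B \<noteq> 0" "f = poly A x / poly B x" for f A B
  proof -
    have "R f (\<alpha> f)" unfolding \<alpha>_def by (rule someI_ex[OF exR])
    then obtain A' B' where AB': "polyin L A'" "polyin L B'" "B' \<noteq> 0" "f = poly A' x / poly B' x"
      "\<alpha> f = Fract (pcompose A' T) (pcompose B' T)" unfolding R_def by blast
    have bx: "poly B x \<noteq> 0" "poly B' x \<noteq> 0" using nzx AB AB' by blast+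
    have "poly A x * poly B' x = poly A' x * poly B x" using AB(4) AB'(4) bx
      by (simp add: divide_eq_eq eq_divide_eq)
    then have "poly (A * B' - A' * B) x = 0" by simp
    moreover have "polyin L (A * B' - A' * B)" using AB AB' L by (simp add: polyin_diff polyin_mult)
    ultimately have "A * B' - A' * B = 0" using transc by blast
    then have eq: "A * B' = A' * B" by simp
    have "pcompose A T * pcompose B' T = pcompose A' T * pcompose B T"
      by (simp add: eq flip: pcompose_mult)
    then have "Fract (pcompose A T) (pcompose B T) = Fract (pcompose A' T) (pcompose B' T)"
      using eq_fract(1)[OF Tnz[OF AB(3)] Tnz[OF AB'(3)]] by simp
    then show ?thesis using AB'(5) by simp
  qed
  obtain rA rB where repf: "\<And>f. polyin L (rA f) \<and> polyin L (rB f) \<and> rB f \<noteq> 0 \<and> f = poly (rA f) x / poly (rB f) x"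
    using rep by metis
  have ha: "hom \<alpha>"
  proof (rule homI)
    show "\<alpha> 1 = 1" using achar[of 1 1 1] polyin_1[OF L] by (simp add: One_fract_def pcompose_1)
  next
    fix f g
    let ?A = "rA f" and ?B = "rB f" and ?C = "rA g" and ?D = "rB g"
    have f: "polyin L ?A" "polyin L ?B" "?B \<noteq> 0" "f = poly ?A x / poly ?B x" using repf by blast+
    have g: "polyin L ?C" "polyin L ?D" "?D \<noteq> 0" "g = poly ?C x / poly ?D x" using repf by blast+
    have bx: "poly ?B x \<noteq> 0" "poly ?D x \<noteq> 0" using nzx f g by blast+
    have "f + g = poly (?A * ?D + ?C * ?B) x / poly (?B * ?D) x"
      using bx by (subst f(4), subst g(4)) (simp add: add_frac_eq)
    then have "\<alpha> (f + g) = Fract (pcompose (?A * ?D + ?C * ?B) T) (pcompose (?B * ?D) T)"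
      using f g L by (intro achar) (simp_all add: polyin_add polyin_mult)
    also have "\<dots> = \<alpha> f + \<alpha> g"
      using achar[OF f] achar[OF g] Tnz[OF f(3)] Tnz[OF g(3)] by (simp add: pcompose_add pcompose_mult)
    finally show "\<alpha> (f + g) = \<alpha> f + \<alpha> g" .
    have "f * g = poly (?A * ?C) x / poly (?B * ?D) x"
      by (subst f(4), subst g(4)) simp
    then have "\<alpha> (f * g) = Fract (pcompose (?A * ?C) T) (pcompose (?B * ?D) T)"
      using f g L by (intro achar) (simp_all add: polyin_mult)
    also have "\<dots> = \<alpha> f * \<alpha> g"
      using achar[OF f] achar[OF g] by (simp add: pcompose_mult)
    finally show "\<alpha> (f * g) = \<alpha> f * \<alpha> g" .
  qed
  have aL: "\<alpha> l = const_rf l" if "l \<in> L" for l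
    using achar[of "[:l:]" 1 l] polyin_const[OF L that] polyin_1[OF L] by (simp add: const_rf_def pcompose_1)
  have ax: "\<alpha> x = Fract [:x, 1:] 1"
    using achar[of "[:0, 1:]" 1 x] polyin_X[OF L] polyin_1[OF L] by (simp add: T_def pcompose_1 pcompose_pCons)
  have key: "map_poly \<alpha> (pcompose P T) = shift_poly (pcompose P T)" if P: "polyin L P" for P
  proof -
    have mP: "map_poly \<alpha> P = map_poly const_rf P"
      using P aL unfolding polyin_def by (intro poly_eqI) (simp add: coeff_map_poly hom_0[OF ha] hom_0[OF hom_const])
    have "map_poly \<alpha> (pcompose P T) = pcompose (map_poly const_rf P) [:Fract [:x, 1:] 1, 1:]"
      by (simp add: map_poly_pcompose[OF ha] mP T_def map_poly_lin[OF ha] ax)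
    moreover have "shift_poly (pcompose P T) = pcompose (map_poly const_rf P) [:Fract [:x, 1:] 1, 1:]"
    proof -
      have "shift_poly (pcompose P T) = pcompose (map_poly const_rf P) (pcompose [:const_rf x, 1:] [:var_rf, 1:])"
        unfolding shift_poly_def by (simp add: map_poly_pcompose[OF hom_const] T_def map_poly_lin[OF hom_const] pcompose_assoc)
      also have "pcompose [:const_rf x, 1:] [:var_rf, 1:] = [:Fract [:x, 1:] 1, 1:]"
        by (simp add: pcompose_pCons const_plus_var)
      finally show ?thesis .
    qed
    ultimately show ?thesis by simp
  qed
  have "rational_Ga_action k \<alpha>"
    unfolding rational_Ga_action_def
  proof (intro conjI allI ballI impI)
    show "\<alpha> (f + g) = \<alpha> f + \<alpha> g" for f g by (rule hom_add[OF ha])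
    show "\<alpha> (f * g) = \<alpha> f * \<alpha> g" for f g by (rule hom_mult[OF ha])
    show "\<alpha> 1 = 1" by (rule hom_1[OF ha])
    show "\<alpha> c = const_rf c" if "c \<in> k" for c using aL kL that by blast
  next
    fix f
    have f: "polyin L (rA f)" "polyin L (rB f)" "rB f \<noteq> 0" "f = poly (rA f) x / poly (rB f) x" using repf by blast+
    have "poly (pcompose (rB f) T) 0 \<noteq> 0" using nzx f by (simp add: poly_pcompose T_def)
    moreover have "poly (pcompose (rA f) T) 0 / poly (pcompose (rB f) T) 0 = f"
      using f(4) by (simp add: poly_pcompose T_def)
    ultimately show "\<exists>p q. poly q 0 \<noteq> 0 \<and> \<alpha> f = Fract p q \<and> poly p 0 / poly q 0 = f"
      using achar[OF f] by blast
  next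
    fix f p q assume q0: "q \<noteq> 0" and fpq: "\<alpha> f = Fract p q"
    let ?A = "rA f" and ?B = "rB f"
    have f: "polyin L ?A" "polyin L ?B" "?B \<noteq> 0" "f = poly ?A x / poly ?B x" using repf by blast+
    have "Fract p q = Fract (pcompose ?A T) (pcompose ?B T)" using fpq achar[OF f] by simp
    then have cross: "p * pcompose ?B T = pcompose ?A T * q"
      using eq_fract(1)[OF q0 Tnz[OF f(3)]] by simp
    let ?h1 = "map_poly \<alpha>" and ?h2 = "shift_poly :: 'a poly \<Rightarrow> _"
    have h1: "hom ?h1" by (rule hom_map_poly[OF ha])
    have h2: "hom ?h2" by (rule hom_shift)
    define u where "u = ?h1 (pcompose ?A T)"
    define v where "v = ?h1 (pcompose ?B T)"
    have u2: "?h2 (pcompose ?A T) = u" unfolding u_def using key[OF f(1)] by simp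
    have v2: "?h2 (pcompose ?B T) = v" unfolding v_def using key[OF f(2)] by simp
    have v0: "v \<noteq> 0" unfolding v_def using map_poly_field_eq_0[OF ha] Tnz[OF f(3)] by blast
    have e1: "?h1 p * v = u * ?h1 q" unfolding u_def v_def using cross hom_mult[OF h1] by metis
    have e2: "?h2 p * v = u * ?h2 q" using cross hom_mult[OF h2] u2 v2 by metis
    have "(?h1 p * ?h2 q) * v = (?h2 p * ?h1 q) * v"
    proof -
      have "(?h1 p * ?h2 q) * v = (?h1 p * v) * ?h2 q" by (simp add: algebra_simps)
      also have "\<dots> = u * ?h1 q * ?h2 q" using e1 by simp
      also have "\<dots> = (u * ?h2 q) * ?h1 q" by (simp add: algebra_simps)
      also have "\<dots> = (?h2 p * v) * ?h1 q" using e2 by simp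
      also have "\<dots> = (?h2 p * ?h1 q) * v" by (simp add: algebra_simps)
      finally show ?thesis .
    qed
    then have "?h1 p * ?h2 q = ?h2 p * ?h1 q" using v0 by simp
    moreover have "?h1 q \<noteq> 0" using map_poly_field_eq_0[OF ha] q0 by blast
    moreover have "?h2 q \<noteq> 0" using shift_nz[OF q0] .
    ultimately show "Fract (?h1 p) (?h1 q) = Fract (?h2 p) (?h2 q)"
      using eq_fract(1) by blast
  qed
  moreover have "\<not> trivial_action \<alpha>"
  proof
    assume "trivial_action \<alpha>"
    then have "Fract [:x, 1:] 1 = Fract [:x:] (1 :: 'a poly)" using ax unfolding trivial_action_def const_rf_def by metis
    then show False by (simp add: eq_fract)
  qed
  ultimately show ?thesis by blast
qed



lemma lead_shift: "lead_coeff (shift_poly (b :: 'a::field poly)) = const_rf (lead_coeff b)"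
proof -
  have "lead_coeff (shift_poly b) = lead_coeff (map_poly const_rf b) * lead_coeff [:var_rf, 1:] ^ degree (map_poly const_rf b)"
    unfolding shift_poly_def by (rule lead_coeff_comp) simp
  then show ?thesis by (simp add: lead_coeff_map_poly_field[OF hom_const])
qed

lemma action_ruled:
  fixes k :: "'a::field_char_0 set"
  assumes V: "function_field_of_variety k UNIV" and act: "rational_Ga_action k \<alpha>"
    and nt: "\<not> trivial_action \<alpha>"
  shows "birationally_ruled k"
proof -
  have ha: "hom \<alpha>" using act unfolding rational_Ga_action_def by (intro homI) auto
  have ak: "\<alpha> c = const_rf c" if "c \<in> k" for c using act that unfolding rational_Ga_action_def by blast
  have h1: "hom (map_poly \<alpha>)" by (rule hom_map_poly[OF ha])
  have h2: "hom (shift_poly :: 'a poly \<Rightarrow> _)" by (rule hom_shift)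
  have good: "\<exists>a b. b \<noteq> 0 \<and> poly b 0 \<noteq> 0 \<and> f = poly a 0 / poly b 0 \<and> map_poly \<alpha> a = shift_poly a
      \<and> map_poly \<alpha> b = shift_poly b \<and> \<alpha> f = Fract a b" for f
  proof -
    obtain p q where pq: "poly q 0 \<noteq> 0" "\<alpha> f = Fract p q" "poly p 0 / poly q 0 = f"
      using act unfolding rational_Ga_action_def by blast
    have q0: "q \<noteq> 0" using pq(1) by auto
    obtain a b where ab: "bez a b" "lead_coeff b = 1" "a * q = p * b" using bez_rep_exists[OF q0] by blast
    have b0: "b \<noteq> 0" using ab(2) by auto
    have "Fract a b = Fract p q" using eq_fract(1)[OF b0 q0] ab(3) by simp
    then have fab: "\<alpha> f = Fract a b" using pq(2) by simp
    have "b dvd q" using bez_dvd[OF ab(1) ab(3)] .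
    then obtain w where "q = b * w" by blast
    then have b00: "poly b 0 \<noteq> 0" using pq(1) by auto
    have "poly a 0 * poly q 0 = poly p 0 * poly b 0" using arg_cong[OF ab(3), of "\<lambda>r. poly r 0"] by simp
    then have fe: "f = poly a 0 / poly b 0" using pq(1,3) b00 by (simp add: divide_eq_eq eq_divide_eq)
    have coc: "Fract (map_poly \<alpha> a) (map_poly \<alpha> b) = Fract (shift_poly a) (shift_poly b)"
      using act fab b0 unfolding rational_Ga_action_def by blast
    have n1: "map_poly \<alpha> b \<noteq> 0" using map_poly_field_eq_0[OF ha] b0 by blast
    have n2: "shift_poly b \<noteq> 0" using shift_nz[OF b0] .
    have cr: "map_poly \<alpha> a * shift_poly b = shift_poly a * map_poly \<alpha> b"
      using coc eq_fract(1)[OF n1 n2] by simp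
    have l1: "lead_coeff (map_poly \<alpha> b) = 1" using lead_coeff_map_poly_field[OF ha] ab(2) hom_1[OF ha] by simp
    have l2: "lead_coeff (shift_poly b) = 1" by (simp only: lead_shift ab(2) hom_1[OF hom_const])
    have "map_poly \<alpha> a = shift_poly a \<and> map_poly \<alpha> b = shift_poly b"
      by (rule bez_unique[OF bez_hom[OF h1 ab(1)] bez_hom[OF h2 ab(1)] l1 l2 cr])
    then show ?thesis using b0 b00 fe fab by blast
  qed
  define L where "L = {f. \<alpha> f = const_rf f}"
  have kL: "k \<subseteq> L" using ak unfolding L_def by blast
  have subL: "subfield L" unfolding subfield_def L_def
    by (simp add: hom_0[OF ha] hom_0[OF hom_const] hom_1[OF ha] hom_1[OF hom_const] hom_add[OF ha]
        hom_add[OF hom_const] hom_mult[OF ha] hom_mult[OF hom_const] hom_uminus[OF ha] hom_uminus[OF hom_const]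
        hom_inverse[OF ha] hom_inverse[OF hom_const])
  have polyinL: "polyin L p \<longleftrightarrow> map_poly \<alpha> p = map_poly const_rf p" for p
  proof
    assume "polyin L p" then show "map_poly \<alpha> p = map_poly const_rf p"
      unfolding polyin_def L_def by (intro poly_eqI) (simp add: coeff_map_poly hom_0[OF ha] hom_0[OF hom_const])
  next
    assume e: "map_poly \<alpha> p = map_poly const_rf p"
    show "polyin L p" unfolding polyin_def L_def
    proof (intro allI CollectI)
      fix i show "\<alpha> (coeff p i) = const_rf (coeff p i)"
        using arg_cong[OF e, of "\<lambda>r. coeff r i"] by (simp add: coeff_map_poly hom_0[OF ha] hom_0[OF hom_const])
    qed
  qed
  have slice_from: "\<exists>s. \<alpha> s = const_rf s + var_rf" if A: "degree A = Suc m" "map_poly \<alpha> A = shift_poly A" for A m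
  proof -
    have dA: "degree (map_poly const_rf A) = Suc m" using A(1) by (simp only: degree_map_poly_field[OF hom_const])
    have "coeff (map_poly \<alpha> A) m = coeff (shift_poly A) m" using A(2) by simp
    then have cm: "\<alpha> (coeff A m) = const_rf (coeff A m) + of_nat (Suc m) * var_rf * const_rf (coeff A (Suc m))"
      unfolding shift_poly_def coeff_pcompose_top(2)[OF dA]
      by (simp add: coeff_map_poly hom_0[OF ha] hom_0[OF hom_const])
    have "coeff (map_poly \<alpha> A) (Suc m) = coeff (shift_poly A) (Suc m)" using A(2) by simp
    then have cl: "\<alpha> (coeff A (Suc m)) = const_rf (coeff A (Suc m))"
      unfolding shift_poly_def coeff_pcompose_top(1)[OF dA]
      by (simp add: coeff_map_poly hom_0[OF ha] hom_0[OF hom_const])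
    define l where "l = coeff A (Suc m)"
    define c where "c = coeff A m"
    define N where "N = (of_nat (Suc m) :: 'a)"
    have "A \<noteq> 0" using A(1) by auto
    then have "lead_coeff A \<noteq> 0" by simp
    then have l0: "l \<noteq> 0" unfolding l_def using A(1) by simp
    have N0: "N \<noteq> 0" unfolding N_def by (rule of_nat_neq_0)
    have cN: "const_rf N = of_nat (Suc m)" "\<alpha> N = of_nat (Suc m)" unfolding N_def
      using hom_of_nat[OF hom_const] hom_of_nat[OF ha] by blast+
    have cN0: "const_rf N \<noteq> 0" "const_rf l \<noteq> 0" using hom_field_nz[OF hom_const] N0 l0 by blast+
    define s where "s = c / (N * l)"
    have "\<alpha> s = (const_rf c + const_rf N * var_rf * const_rf l) / (const_rf N * const_rf l)"
      unfolding s_def using cm cl cN by (simp add: hom_divide[OF ha] hom_mult[OF ha] c_def l_def)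
    also have "\<dots> = const_rf c / (const_rf N * const_rf l) + var_rf"
      using cN0 by (simp add: add_divide_distrib)
    also have "const_rf c / (const_rf N * const_rf l) = const_rf s"
      unfolding s_def by (simp add: hom_divide[OF hom_const] hom_mult[OF hom_const])
    finally show ?thesis by blast
  qed
  obtain f0 where f0: "\<alpha> f0 \<noteq> const_rf f0" using nt unfolding trivial_action_def by blast
  obtain a b where ab: "b \<noteq> 0" "poly b 0 \<noteq> 0" "f0 = poly a 0 / poly b 0" "map_poly \<alpha> a = shift_poly a"
      "map_poly \<alpha> b = shift_poly b" "\<alpha> f0 = Fract a b" using good[of f0] by blast
  have "\<exists>A m. degree A = Suc m \<and> map_poly \<alpha> A = shift_poly A"
  proof (cases "degree b = 0 \<and> degree a = 0")
    case True
    then obtain a0 b0 where ab0: "a = [:a0:]" "b = [:b0:]" by (metis degree_eq_zeroE)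
    have b00: "b0 \<noteq> 0" using ab(1) ab0 by auto
    have "\<alpha> f0 = Fract [:a0:] [:b0:]" using ab ab0 by simp
    also have "\<dots> = Fract [:a0 / b0:] 1" using b00 by (simp add: eq_fract)
    also have "\<dots> = const_rf f0" using ab(3) ab0 by (simp add: const_rf_def)
    finally show ?thesis using f0 by blast
  next
    case False
    then show ?thesis using ab(4,5) by (metis not0_implies_Suc)
  qed
  then obtain s where sl: "\<alpha> s = const_rf s + var_rf" using slice_from by blast
  have as: "\<alpha> s = Fract [:s, 1:] 1" using sl const_plus_var by simp
  have transc: "p = 0" if p: "polyin L p" "poly p s = 0" for p
  proof -
    have "\<alpha> (poly p s) = poly (map_poly const_rf p) (Fract [:s, 1:] 1)"
      using poly_map_poly_hom[OF ha] polyinL p(1) as by simp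
    then have "Fract (pcompose p [:s, 1:]) 1 = 0" using p(2) hom_0[OF ha] by (simp add: poly_map_const_Fract)
    then have "pcompose p [:s, 1:] = 0" by (simp add: Zero_fract_def eq_fract)
    then show ?thesis using pcompose_eq_0 by fastforce
  qed
  have tr: "\<not> algebraic_over L s" using transc unfolding algebraic_over_def polyin_def by blast
  have allQ: "f \<in> Qset L s" for f
  proof -
    obtain a b where ab: "b \<noteq> 0" "poly b 0 \<noteq> 0" "f = poly a 0 / poly b 0" "map_poly \<alpha> a = shift_poly a"
      "map_poly \<alpha> b = shift_poly b" using good[of f] by blast
    have tw: "polyin L (pcompose P [:-s, 1:])" if P: "map_poly \<alpha> P = shift_poly P" for P
    proof -
      have m1: "map_poly \<alpha> [:- s, 1:] = [:- const_rf s - var_rf, 1:]"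
        by (simp add: map_poly_lin[OF ha] hom_uminus[OF ha] sl)
      have "map_poly \<alpha> (pcompose P [:-s, 1:]) = pcompose (pcompose (map_poly const_rf P) [:var_rf, 1:]) [:- const_rf s - var_rf, 1:]"
        by (simp add: map_poly_pcompose[OF ha] P m1 shift_poly_def)
      also have "\<dots> = pcompose (map_poly const_rf P) (pcompose [:var_rf, 1:] [:- const_rf s - var_rf, 1:])"
        by (simp add: pcompose_assoc)
      also have "pcompose [:var_rf, 1:] [:- const_rf s - var_rf, 1:] = [:const_rf (- s), 1:]"
        by (simp add: pcompose_pCons hom_uminus[OF hom_const])
      also have "\<dots> = map_poly const_rf [:-s, 1:]" by (simp add: map_poly_lin[OF hom_const])
      also have "pcompose (map_poly const_rf P) \<dots> = map_poly const_rf (pcompose P [:-s, 1:])"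
        by (simp add: map_poly_pcompose[OF hom_const])
      finally show ?thesis using polyinL by blast
    qed
    show ?thesis
    proof (rule QsetI[OF tw[OF ab(4)] tw[OF ab(5)]])
      show "poly (pcompose b [:- s, 1:]) s \<noteq> 0" using ab(2) by (simp add: poly_pcompose)
      show "f = poly (pcompose a [:- s, 1:]) s / poly (pcompose b [:- s, 1:]) s" using ab(3) by (simp add: poly_pcompose)
    qed
  qed
  have genL: "gen_field (L \<union> {s}) = UNIV" using allQ Qset_gen_field[OF subL, of s] by blast
  obtain S where S: "finite S" "gen_field (k \<union> S) = UNIV"
    using V unfolding function_field_of_variety_def fin_gen_over_def by blast
  have sk: "subfield k" using V unfolding function_field_of_variety_def by blast
  have repex: "\<exists>A B. polyin L A \<and> polyin L B \<and> poly B s \<noteq> 0 \<and> f = poly A s / poly B s" for f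
  proof -
    obtain A B where "polyin L A" "polyin L B" "poly B s \<noteq> 0" "f = poly A s / poly B s"
      using allQ[of f] by (rule QsetE)
    then show ?thesis by blast
  qed
  obtain rA rB where rep: "\<And>f. polyin L (rA f) \<and> polyin L (rB f) \<and> poly (rB f) s \<noteq> 0 \<and> f = poly (rA f) s / poly (rB f) s"
    using repex by metis
  define C where "C = (\<Union>g\<in>S. set (coeffs (rA g)) \<union> set (coeffs (rB g)))"
  have finC: "finite C" unfolding C_def using S(1) by blast
  have coeffs_in: "x \<in> set (coeffs p) \<Longrightarrow> \<exists>i. x = coeff p i" for x and p :: "'a poly"
    by (auto simp: coeffs_def split: if_splits)
  have CL: "C \<subseteq> L"
  proof
    fix c assume "c \<in> C"
    then obtain g where "c \<in> set (coeffs (rA g)) \<or> c \<in> set (coeffs (rB g))" unfolding C_def by blast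
    then have "\<exists>p. polyin L p \<and> c \<in> set (coeffs p)" using rep by blast
    then obtain p where p: "polyin L p" "c \<in> set (coeffs p)" by blast
    then obtain i where "c = coeff p i" using coeffs_in by blast
    then show "c \<in> L" using p(1) unfolding polyin_def by blast
  qed
  define L0 where "L0 = gen_field (k \<union> C)"
  have sub0: "subfield L0" unfolding L0_def by (rule gen_field_subfield)
  have L0L: "L0 \<subseteq> L" unfolding L0_def using gen_field_least[OF subL] kL CL by blast
  have CL0: "C \<subseteq> L0" and kL0: "k \<subseteq> L0" unfolding L0_def using gen_field_sub[of "k \<union> C"] by blast+
  have polyin0: "polyin L0 p" if "set (coeffs p) \<subseteq> C" for p
    unfolding polyin_def
  proof
    fix i show "coeff p i \<in> L0"
    proof (cases "p \<noteq> 0 \<and> i \<le> degree p")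
      case True then show ?thesis using coeff_in_coeffs[of p i] that CL0 by blast
    next
      case False then have "coeff p i = 0" by (auto simp: coeff_eq_0)
      then show ?thesis using subfield_0[OF sub0] by simp
    qed
  qed
  have "k \<union> S \<subseteq> gen_field (L0 \<union> {s})"
  proof
    fix g assume "g \<in> k \<union> S"
    then show "g \<in> gen_field (L0 \<union> {s})"
    proof
      assume "g \<in> k" then show ?thesis using kL0 gen_field_sub[of "L0 \<union> {s}"] by blast
    next
      assume gS: "g \<in> S"
      have "set (coeffs (rA g)) \<subseteq> C" "set (coeffs (rB g)) \<subseteq> C" unfolding C_def using gS by blast+
      then have pa: "polyin L0 (rA g)" and pb: "polyin L0 (rB g)" using polyin0 by blast+
      have "g \<in> Qset L0 s" by (rule QsetI[OF pa pb]) (use rep[of g] in blast)+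
      then show ?thesis using Qset_gen_field[OF sub0] by blast
    qed
  qed
  then have gen0: "gen_field (L0 \<union> {s}) = UNIV"
    using gen_field_least[OF gen_field_subfield, of "k \<union> S" "L0 \<union> {s}"] S(2) by blast
  have LL0: "L \<subseteq> L0"
  proof
    fix l assume lL: "l \<in> L"
    have "l \<in> Qset L0 s" using gen_field_Qset[OF sub0, of s] gen0 by blast
    then obtain A B where AB: "polyin L0 A" "polyin L0 B" "poly B s \<noteq> 0" "l = poly A s / poly B s"
      by (rule QsetE)
    have "polyin L (smult l B - A)"
      using polyin_mono[OF L0L] AB(1,2) lL subL by (simp add: polyin_diff polyin_smult)
    moreover have "poly (smult l B - A) s = 0" using AB(3,4) by simp
    ultimately have "smult l B - A = 0" using transc by blast
    then have e: "smult l B = A" by simp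
    have B0: "B \<noteq> 0" using AB(3) by auto
    then have lb: "lead_coeff B \<noteq> 0" by simp
    have "l * lead_coeff B = coeff A (degree B)" using arg_cong[OF e, of "\<lambda>r. coeff r (degree B)"] by simp
    then have "l = coeff A (degree B) / lead_coeff B" using lb by (simp add: eq_divide_eq)
    moreover have "coeff A (degree B) \<in> L0" "lead_coeff B \<in> L0" using AB(1,2) unfolding polyin_def by blast+
    ultimately show "l \<in> L0" using subfield_divide[OF sub0] by simp
  qed
  have L0eq: "L0 = L" using L0L LL0 by blast
  have "fin_gen_over k L" unfolding fin_gen_over_def using finC CL L0eq L0_def by blast
  moreover have "alg_closed_in k L" using V unfolding function_field_of_variety_def alg_closed_in_def by blast
  ultimately have "function_field_of_variety k L"
    unfolding function_field_of_variety_def using sk subL kL by blast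
  then show ?thesis unfolding birationally_ruled_def using tr genL by blast
qed


theorem proposition1p1:
  fixes k :: "'a::field_char_0 set"
  assumes "function_field_of_variety k (UNIV :: 'a set)"
  shows "(\<exists>\<alpha>. rational_Ga_action k \<alpha> \<and> \<not> trivial_action \<alpha>) \<longleftrightarrow> birationally_ruled k"
proof
  assume "\<exists>\<alpha>. rational_Ga_action k \<alpha> \<and> \<not> trivial_action \<alpha>"
  then obtain \<alpha> where "rational_Ga_action k \<alpha>" "\<not> trivial_action \<alpha>" by blast
  then show "birationally_ruled k" using action_ruled[OF assms] by blast
next
  assume "birationally_ruled k"
  then obtain L x where L: "function_field_of_variety k L" "\<not> algebraic_over L x" "gen_field (L \<union> {x}) = UNIV"
    unfolding birationally_ruled_def by blast
  have "k \<subseteq> L" "subfield L" using L(1) unfolding function_field_of_variety_def by blast+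
  then show "\<exists>\<alpha>. rational_Ga_action k \<alpha> \<and> \<not> trivial_action \<alpha>" using ruled_action L(2,3) by blast
qed

end
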